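(* Let $\xi\in L^0(\Omega,\mathcal F,Q;\mathbb R^d)$, $f:\mathcal P(\mathbb R^d)\to\mathbb R$, $L\in\mathcal L^Q$, and suppose $F_{Q_L}:\mathcal L^{Q_L}\to\mathbb R$, $F_{Q_L}(L')=f((L'Q_L)_\xi)$, is differentiable at $L_0=1$. Then there exists a bounded Borel function $g:\mathbb R^d\to\mathbb R$ such that $DF_{Q_L}(1)=g(\xi)$, $Q$-a.s. Moreover $g$ depends on $(Q,L,\xi)$ only through $(Q_L)_\xi$, in the following sense: if $Q'$ is any probability measure on $(\Omega,\mathcal F)$, $L'\in\mathcal L^{Q'}$ and $\xi'\in L^0(\Omega,\mathcal F,Q';\mathbb R^d)$ satisfy $(L'Q')_{\xi'}=(LQ)_\xi$, then $\widehat L'\mapsto f((\widehat L'Q'_{L'})_{\xi'})$, $\widehat L'\in\mathcal L^{Q'_{L'}}$, is differentiable at $1$ and its derivative equals $g(\xi')$, $Q'_{L'}$-a.s. (Consequently one writes $\partial_1F((Q_L)_\xi,x):=g(x)$.)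
   Context: $(\Omega,\mathcal B(\Omega))$ is a Radon space, $Q$ a probability measure on it, $\mathcal F=\mathcal B(\Omega)\vee\mathcal N_Q$. For any probability $Q'$ on $(\Omega,\mathcal F)$: $L^p_0(Q'):=\{\eta\in L^p(Q'):E^{Q'}[\eta]=0\}$, $\mathcal L^{Q'}:=\{L\in L^1(Q'):\ L>0\ Q'\text{-a.s.},\ E^{Q'}[L]=1\}$, $Q'_L:=LQ'$, $(LQ')_\xi$ is the law of $\xi$ under $LQ'$ ($\int\varphi\,d(LQ')_\xi=E^{Q'}[L\varphi(\xi)]$), and $F_{Q'}(L):=f((LQ')_\xi)$. $F_{Q'}$ is differentiable at $L$ if there is a continuous linear $(DF_{Q'})(L):L^1_0(Q')\to\mathbb R$ with $F_{Q'}(L'')-F_{Q'}(L)=(DF_{Q'})(L)(L''-L)+o(|L''-L|_{L^1(Q')})$ for $L''\in\mathcal L^{Q'}$, $|L''-L|_{L^1(Q')}\to0$; it is identified with the unique $DF_{Q'}(L)\in L^\infty_0(Q')$ such that $(DF_{Q'})(L)(\eta)=E^{Q'}[DF_{Q'}(L)\eta]$. *)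

theory Defs
  imports "HOL-Probability.Probability"
begin

definition radon_space :: "'a::topological_space itself \<Rightarrow> bool" where
  "radon_space _ \<longleftrightarrow>
     (\<forall>x y::'a. x \<noteq> y \<longrightarrow> (\<exists>U V. open U \<and> open V \<and> x \<in> U \<and> y \<in> V \<and> U \<inter> V = {})) \<and>
     (\<forall>\<mu>::'a measure. sets \<mu> = sets borel \<and> finite_measure \<mu> \<longrightarrow>
        (\<forall>A \<in> sets borel. emeasure \<mu> A = (SUP K \<in> {K. compact K \<and> K \<subseteq> A}. emeasure \<mu> K)))"

definition L1_0 :: "'a measure \<Rightarrow> ('a \<Rightarrow> real) set" where
  "L1_0 M = {\<eta>. integrable M \<eta> \<and> integral\<^sup>L M \<eta> = 0}"

definition Linf_0 :: "'a measure \<Rightarrow> ('a \<Rightarrow> real) set" where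
  "Linf_0 M = {D. D \<in> borel_measurable M \<and> (\<exists>C. AE \<omega> in M. \<bar>D \<omega>\<bar> \<le> C) \<and> integral\<^sup>L M D = 0}"

definition L1_norm :: "'a measure \<Rightarrow> ('a \<Rightarrow> real) \<Rightarrow> real" where
  "L1_norm M \<eta> = integral\<^sup>L M (\<lambda>\<omega>. \<bar>\<eta> \<omega>\<bar>)"

definition dens_set :: "'a measure \<Rightarrow> ('a \<Rightarrow> real) set" where
  "dens_set M = {L. integrable M L \<and> (AE \<omega> in M. L \<omega> > 0) \<and> integral\<^sup>L M L = 1}"

definition law_under :: "'a measure \<Rightarrow> ('a \<Rightarrow> real) \<Rightarrow> ('a \<Rightarrow> 'b::topological_space) \<Rightarrow> 'b measure" where
  "law_under M L \<xi> = distr (density M (\<lambda>\<omega>. ennreal (L \<omega>))) borel \<xi>"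

definition F_fun :: "('b::topological_space measure \<Rightarrow> real) \<Rightarrow> ('a \<Rightarrow> 'b) \<Rightarrow> 'a measure \<Rightarrow> ('a \<Rightarrow> real) \<Rightarrow> real" where
  "F_fun f \<xi> M L = f (law_under M L \<xi>)"

definition cont_lin_L1_0 :: "'a measure \<Rightarrow> (('a \<Rightarrow> real) \<Rightarrow> real) \<Rightarrow> bool" where
  "cont_lin_L1_0 M l \<longleftrightarrow>
     (\<forall>\<eta>1 \<in> L1_0 M. \<forall>\<eta>2 \<in> L1_0 M. l (\<lambda>\<omega>. \<eta>1 \<omega> + \<eta>2 \<omega>) = l \<eta>1 + l \<eta>2) \<and>
     (\<forall>c. \<forall>\<eta> \<in> L1_0 M. l (\<lambda>\<omega>. c * \<eta> \<omega>) = c * l \<eta>) \<and>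
     (\<exists>C. \<forall>\<eta> \<in> L1_0 M. \<bar>l \<eta>\<bar> \<le> C * L1_norm M \<eta>)"

definition has_DF :: "'a measure \<Rightarrow> (('a \<Rightarrow> real) \<Rightarrow> real) \<Rightarrow> ('a \<Rightarrow> real) \<Rightarrow> (('a \<Rightarrow> real) \<Rightarrow> real) \<Rightarrow> bool" where
  "has_DF M F L l \<longleftrightarrow> cont_lin_L1_0 M l \<and>
     (\<forall>\<epsilon>>0. \<exists>\<delta>>0. \<forall>L'' \<in> dens_set M. L1_norm M (\<lambda>\<omega>. L'' \<omega> - L \<omega>) < \<delta> \<longrightarrow>
        \<bar>F L'' - F L - l (\<lambda>\<omega>. L'' \<omega> - L \<omega>)\<bar> \<le> \<epsilon> * L1_norm M (\<lambda>\<omega>. L'' \<omega> - L \<omega>))"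

text \<open>The element \<open>D \<in> L^\<infinity>_0(M)\<close> with \<open>l(\<eta>) = E^M[D \<eta>]\<close> for \<open>\<eta> \<in> L^1_0(M)\<close>
  (the identification of the derivative with an element of \<open>L^\<infinity>_0\<close>).\<close>
definition represents :: "'a measure \<Rightarrow> (('a \<Rightarrow> real) \<Rightarrow> real) \<Rightarrow> ('a \<Rightarrow> real) \<Rightarrow> bool" where
  "represents M l D \<longleftrightarrow> D \<in> Linf_0 M \<and> (\<forall>\<eta> \<in> L1_0 M. l \<eta> = integral\<^sup>L M (\<lambda>\<omega>. D \<omega> * \<eta> \<omega>))"

definition derivative_equals :: "'a measure \<Rightarrow> (('a \<Rightarrow> real) \<Rightarrow> real) \<Rightarrow> ('a \<Rightarrow> real) \<Rightarrow> ('a \<Rightarrow> real) \<Rightarrow> 'a measure \<Rightarrow> bool" where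
  "derivative_equals M F L h N \<longleftrightarrow>
     (\<exists>l. has_DF M F L l) \<and>
     (\<forall>l. has_DF M F L l \<longrightarrow> represents M l h) \<and>
     (\<forall>l D. has_DF M F L l \<and> represents M l D \<longrightarrow> (AE \<omega> in N. D \<omega> = h \<omega>))"

end

theory Submission
  imports Defs
begin


lemma L1_0_add: "a \<in> L1_0 M \<Longrightarrow> b \<in> L1_0 M \<Longrightarrow> (\<lambda>x. a x + b x) \<in> L1_0 M"
  by (auto simp: L1_0_def)
lemma L1_0_diff: "a \<in> L1_0 M \<Longrightarrow> b \<in> L1_0 M \<Longrightarrow> (\<lambda>x. a x - b x) \<in> L1_0 M"
  by (auto simp: L1_0_def)
lemma L1_0_mult: "a \<in> L1_0 M \<Longrightarrow> (\<lambda>x. c * a x) \<in> L1_0 M"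
  by (auto simp: L1_0_def)

lemma cl_add: "cont_lin_L1_0 M l \<Longrightarrow> a \<in> L1_0 M \<Longrightarrow> b \<in> L1_0 M \<Longrightarrow> l (\<lambda>x. a x + b x) = l a + l b"
  by (auto simp: cont_lin_L1_0_def)
lemma cl_mult: "cont_lin_L1_0 M l \<Longrightarrow> a \<in> L1_0 M \<Longrightarrow> l (\<lambda>x. c * a x) = c * l a"
  by (auto simp: cont_lin_L1_0_def)
lemma cl_diff: "cont_lin_L1_0 M l \<Longrightarrow> a \<in> L1_0 M \<Longrightarrow> b \<in> L1_0 M \<Longrightarrow> l (\<lambda>x. a x - b x) = l a - l b"
proof -
  assume l: "cont_lin_L1_0 M l" and a: "a \<in> L1_0 M" and b: "b \<in> L1_0 M"
  have "l (\<lambda>x. b x + (a x - b x)) = l b + l (\<lambda>x. a x - b x)"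
    using cl_add[OF l b L1_0_diff[OF a b]] .
  moreover have "(\<lambda>x. b x + (a x - b x)) = a" by auto
  ultimately show ?thesis by simp
qed
lemma cl_bound: "cont_lin_L1_0 M l \<Longrightarrow> \<exists>C\<ge>0. \<forall>\<eta>\<in>L1_0 M. \<bar>l \<eta>\<bar> \<le> C * L1_norm M \<eta>"
proof -
  assume "cont_lin_L1_0 M l"
  then obtain C where C: "\<forall>\<eta>\<in>L1_0 M. \<bar>l \<eta>\<bar> \<le> C * L1_norm M \<eta>" by (auto simp: cont_lin_L1_0_def)
  have "\<forall>\<eta>\<in>L1_0 M. \<bar>l \<eta>\<bar> \<le> max C 0 * L1_norm M \<eta>"
  proof
    fix \<eta> assume "\<eta> \<in> L1_0 M"
    moreover have "L1_norm M \<eta> \<ge> 0" by (simp add: L1_norm_def)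
    ultimately show "\<bar>l \<eta>\<bar> \<le> max C 0 * L1_norm M \<eta>" using C
      by (meson max.cobounded1 mult_right_mono order_trans)
  qed
  then show ?thesis by (intro exI[of _ "max C 0"]) auto
qed


lemma int_bmult:
  fixes f g :: "'a \<Rightarrow> real"
  assumes "integrable M f" "g \<in> borel_measurable M" "\<And>x. x \<in> space M \<Longrightarrow> \<bar>g x\<bar> \<le> B"
  shows "integrable M (\<lambda>x. g x * f x)"
proof (rule Bochner_Integration.integrable_bound[where f="\<lambda>x. B * f x"])
  show "integrable M (\<lambda>x. B * f x)" using assms(1) by simp
  show "(\<lambda>x. g x * f x) \<in> borel_measurable M" using assms by measurable
  show "AE x in M. norm (g x * f x) \<le> norm (B * f x)"
  proof (rule AE_I2)
    fix x assume "x \<in> space M"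
    then have "\<bar>g x\<bar> \<le> B" by (rule assms(3))
    then have "\<bar>g x\<bar> * \<bar>f x\<bar> \<le> \<bar>B\<bar> * \<bar>f x\<bar>" by (intro mult_right_mono) auto
    then show "norm (g x * f x) \<le> norm (B * f x)" by (simp add: abs_mult)
  qed
qed

lemma dct_L1:
  fixes f w :: "'a \<Rightarrow> real"
  assumes "\<And>i. integrable M (s i)" "integrable M f" "integrable M w"
    and "\<And>x. x \<in> space M \<Longrightarrow> (\<lambda>i. s i x) \<longlonglongrightarrow> f x"
    and "\<And>i x. x \<in> space M \<Longrightarrow> \<bar>s i x\<bar> \<le> w x"
  shows "(\<lambda>i. \<integral>x. \<bar>s i x - f x\<bar> \<partial>M) \<longlonglongrightarrow> 0"
proof -
  have "(\<lambda>i. \<integral>x. \<bar>s i x - f x\<bar> \<partial>M) \<longlonglongrightarrow> (\<integral>x. 0 \<partial>M)"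
  proof (rule integral_dominated_convergence[where w="\<lambda>x. w x + \<bar>f x\<bar>"])
    show "integrable M (\<lambda>x. w x + \<bar>f x\<bar>)" using assms by auto
    show "(\<lambda>x. 0::real) \<in> borel_measurable M" by simp
    show "\<And>i. (\<lambda>x. \<bar>s i x - f x\<bar>) \<in> borel_measurable M" using assms(1,2) by measurable
    show "AE x in M. (\<lambda>i. \<bar>s i x - f x\<bar>) \<longlonglongrightarrow> 0"
    proof (rule AE_I2)
      fix x assume "x \<in> space M"
      then have "(\<lambda>i. s i x - f x) \<longlonglongrightarrow> f x - f x" using assms(4) by (intro tendsto_intros) auto
      then show "(\<lambda>i. \<bar>s i x - f x\<bar>) \<longlonglongrightarrow> 0" using tendsto_rabs[of _ 0] by fastforce
    qed
    show "\<And>i. AE x in M. norm \<bar>s i x - f x\<bar> \<le> w x + \<bar>f x\<bar>"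
    proof (intro AE_I2)
      fix i x assume "x \<in> space M"
      then have "\<bar>s i x\<bar> \<le> w x" by (rule assms(5))
      then show "norm \<bar>s i x - f x\<bar> \<le> w x + \<bar>f x\<bar>" by simp
    qed
  qed
  then show ?thesis by simp
qed



lemma dual_W:
  fixes \<mu> :: "'b measure" and lam :: "('b \<Rightarrow> real) \<Rightarrow> real"
  assumes P: "prob_space \<mu>" and cl: "cont_lin_L1_0 \<mu> lam" and C0: "C \<ge> 0"
    and C: "\<forall>\<eta>\<in>L1_0 \<mu>. \<bar>lam \<eta>\<bar> \<le> C * L1_norm \<mu> \<eta>"
  assumes W_def: "W = (\<lambda>k. lam (\<lambda>x. k x - integral\<^sup>L \<mu> k) + 2 * C * integral\<^sup>L \<mu> k)"
  shows W_add: "\<And>a b. integrable \<mu> a \<Longrightarrow> integrable \<mu> b \<Longrightarrow> W (\<lambda>x. a x + b x) = W a + W b"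
    and W_mult: "\<And>a c. integrable \<mu> a \<Longrightarrow> W (\<lambda>x. c * a x) = c * W a"
    and W_lam: "\<And>a. integrable \<mu> a \<Longrightarrow> \<bar>lam (\<lambda>x. a x - integral\<^sup>L \<mu> a)\<bar> \<le> 2 * C * (\<integral>x. \<bar>a x\<bar> \<partial>\<mu>)"
    and W_bound: "\<And>a. integrable \<mu> a \<Longrightarrow> \<bar>W a\<bar> \<le> 4 * C * (\<integral>x. \<bar>a x\<bar> \<partial>\<mu>)"
    and W_diff: "\<And>a b. integrable \<mu> a \<Longrightarrow> integrable \<mu> b \<Longrightarrow> W (\<lambda>x. a x - b x) = W a - W b"
    and W_L10: "\<And>a. a \<in> L1_0 \<mu> \<Longrightarrow> W a = lam a"
proof -
  interpret prob_space \<mu> by fact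
  have mem: "(\<lambda>x. a x - integral\<^sup>L \<mu> a) \<in> L1_0 \<mu>" if "integrable \<mu> a" for a
    using that by (auto simp: L1_0_def prob_space)
  show add: "W (\<lambda>x. a x + b x) = W a + W b" if a: "integrable \<mu> a" and b: "integrable \<mu> b" for a b
  proof -
    have "(\<lambda>x. (a x + b x) - integral\<^sup>L \<mu> (\<lambda>x. a x + b x)) =
          (\<lambda>x. (a x - integral\<^sup>L \<mu> a) + (b x - integral\<^sup>L \<mu> b))"
      using a b by (auto simp: Bochner_Integration.integral_add)
    then show ?thesis unfolding W_def using cl_add[OF cl mem[OF a] mem[OF b]] a b
      by (simp add: Bochner_Integration.integral_add algebra_simps)
  qed
  show mult: "W (\<lambda>x. c * a x) = c * W a" if a: "integrable \<mu> a" for a c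
  proof -
    have "(\<lambda>x. c * a x - integral\<^sup>L \<mu> (\<lambda>x. c * a x)) = (\<lambda>x. c * (a x - integral\<^sup>L \<mu> a))"
      by (auto simp: algebra_simps)
    then show ?thesis unfolding W_def using cl_mult[OF cl mem[OF a]]
      by (simp add: algebra_simps)
  qed
  show lb: "\<bar>lam (\<lambda>x. a x - integral\<^sup>L \<mu> a)\<bar> \<le> 2 * C * (\<integral>x. \<bar>a x\<bar> \<partial>\<mu>)" if a: "integrable \<mu> a" for a
  proof -
    have i1: "\<bar>integral\<^sup>L \<mu> a\<bar> \<le> (\<integral>x. \<bar>a x\<bar> \<partial>\<mu>)"
      using integral_norm_bound[of \<mu> a] by simp
    have "L1_norm \<mu> (\<lambda>x. a x - integral\<^sup>L \<mu> a) \<le> (\<integral>x. \<bar>a x\<bar> + \<bar>integral\<^sup>L \<mu> a\<bar> \<partial>\<mu>)"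
      unfolding L1_norm_def using a by (intro integral_mono) auto
    also have "\<dots> = (\<integral>x. \<bar>a x\<bar> \<partial>\<mu>) + \<bar>integral\<^sup>L \<mu> a\<bar>"
      using a by (simp add: Bochner_Integration.integral_add prob_space)
    also have "\<dots> \<le> 2 * (\<integral>x. \<bar>a x\<bar> \<partial>\<mu>)" using i1 by simp
    finally have "L1_norm \<mu> (\<lambda>x. a x - integral\<^sup>L \<mu> a) \<le> 2 * (\<integral>x. \<bar>a x\<bar> \<partial>\<mu>)" .
    then have "C * L1_norm \<mu> (\<lambda>x. a x - integral\<^sup>L \<mu> a) \<le> C * (2 * (\<integral>x. \<bar>a x\<bar> \<partial>\<mu>))"
      using C0 by (simp add: mult_left_mono)
    then show ?thesis using C mem[OF a] by force
  qed
  show "\<bar>W a\<bar> \<le> 4 * C * (\<integral>x. \<bar>a x\<bar> \<partial>\<mu>)" if a: "integrable \<mu> a" for a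
  proof -
    have i1: "\<bar>integral\<^sup>L \<mu> a\<bar> \<le> (\<integral>x. \<bar>a x\<bar> \<partial>\<mu>)"
      using integral_norm_bound[of \<mu> a] by simp
    then have "\<bar>2 * C * integral\<^sup>L \<mu> a\<bar> \<le> 2 * C * (\<integral>x. \<bar>a x\<bar> \<partial>\<mu>)"
      using C0 i1 by (simp add: abs_mult mult_left_mono)
    then show ?thesis using lb[OF a] unfolding W_def by linarith
  qed
  show "W (\<lambda>x. a x - b x) = W a - W b" if a: "integrable \<mu> a" and b: "integrable \<mu> b" for a b
  proof -
    have "W (\<lambda>x. a x - b x) = W (\<lambda>x. a x + (-1) * b x)" by simp
    also have "\<dots> = W a + W (\<lambda>x. (-1) * b x)" using a b by (intro add) auto
    also have "\<dots> = W a - W b" using mult[OF b, of "-1"] by simp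
    finally show ?thesis .
  qed
  show "W a = lam a" if "a \<in> L1_0 \<mu>" for a
    using that by (simp add: W_def L1_0_def)
qed


lemma dual_L1:
  fixes \<mu> :: "'b measure" and lam :: "('b \<Rightarrow> real) \<Rightarrow> real"
  assumes P: "prob_space \<mu>" and cl: "cont_lin_L1_0 \<mu> lam"
  shows "\<exists>g. g \<in> borel_measurable \<mu> \<and> (\<exists>B. \<forall>x. \<bar>g x\<bar> \<le> B) \<and> integral\<^sup>L \<mu> g = 0 \<and>
            (\<forall>k\<in>L1_0 \<mu>. lam k = (\<integral>x. g x * k x \<partial>\<mu>))"
proof -
  interpret prob_space \<mu> by fact
  obtain C where C0: "C \<ge> 0" and C: "\<forall>\<eta>\<in>L1_0 \<mu>. \<bar>lam \<eta>\<bar> \<le> C * L1_norm \<mu> \<eta>"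
    using cl_bound[OF cl] by blast
  define W where "W \<equiv> \<lambda>k. lam (\<lambda>x. k x - integral\<^sup>L \<mu> k) + 2 * C * integral\<^sup>L \<mu> k"
  note Wl = dual_W[OF P cl C0 C W_def[THEN meta_eq_to_obj_eq]]
  have W_cont: "(\<lambda>i. W (s i)) \<longlonglongrightarrow> W f"
    if s: "\<And>i. integrable \<mu> (s i)" and f: "integrable \<mu> f"
      and lim: "(\<lambda>i. \<integral>x. \<bar>s i x - f x\<bar> \<partial>\<mu>) \<longlonglongrightarrow> 0" for s f
  proof -
    have "(\<lambda>i. W (s i) - W f) \<longlonglongrightarrow> 0"
    proof (rule Lim_null_comparison)
      show "\<forall>\<^sub>F i in sequentially. norm (W (s i) - W f) \<le> 4 * C * (\<integral>x. \<bar>s i x - f x\<bar> \<partial>\<mu>)"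
      proof (intro always_eventually allI)
        fix i
        have "W (s i) - W f = W (\<lambda>x. s i x - f x)" using Wl(5)[OF s f] by simp
        moreover have "\<bar>W (\<lambda>x. s i x - f x)\<bar> \<le> 4 * C * (\<integral>x. \<bar>s i x - f x\<bar> \<partial>\<mu>)"
          using Wl(4)[of "\<lambda>x. s i x - f x"] s f by auto
        ultimately show "norm (W (s i) - W f) \<le> 4 * C * (\<integral>x. \<bar>s i x - f x\<bar> \<partial>\<mu>)" by simp
      qed
      show "(\<lambda>i. 4 * C * (\<integral>x. \<bar>s i x - f x\<bar> \<partial>\<mu>)) \<longlonglongrightarrow> 0"
        using tendsto_mult_right_zero[OF lim, of "4*C"] by simp
    qed
    then show ?thesis by (simp add: LIM_zero_iff)
  qed
  have int_ind: "integrable \<mu> (indicator A :: 'b \<Rightarrow> real)" if "A \<in> sets \<mu>" for A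
    using that by (simp add: integrable_indicator_iff less_top[symmetric])
  have ind_abs: "(\<integral>x. \<bar>indicator A x :: real\<bar> \<partial>\<mu>) = measure \<mu> A" if "A \<in> sets \<mu>" for A
    using that by (simp add: Int_absorb2 sets.sets_into_space)
  have W_ind: "0 \<le> W (indicator A) \<and> W (indicator A) \<le> 4 * C * measure \<mu> A" if A: "A \<in> sets \<mu>" for A
  proof -
    have "\<bar>lam (\<lambda>x. indicator A x - integral\<^sup>L \<mu> (indicator A))\<bar> \<le> 2 * C * measure \<mu> A"
      using Wl(3)[OF int_ind[OF A]] ind_abs[OF A] by simp
    moreover have "integral\<^sup>L \<mu> (indicator A :: 'b \<Rightarrow> real) = measure \<mu> A"
      using A by (simp add: Int_absorb2 sets.sets_into_space)
    ultimately show ?thesis unfolding W_def by (auto simp: abs_le_iff)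
  qed
  have W0: "W (\<lambda>x. 0) = 0"
    using Wl(2)[of "\<lambda>x. 0" 0] by simp
  define \<nu> where "\<nu> \<equiv> \<lambda>A. ennreal (W (indicator A))"
  have ca: "countably_additive (sets \<mu>) \<nu>"
    unfolding countably_additive_def
  proof (intro allI impI)
    fix A :: "nat \<Rightarrow> 'b set"
    assume A: "range A \<subseteq> sets \<mu>" and dj: "disjoint_family A" and U: "\<Union> (range A) \<in> sets \<mu>"
    have fin: "(\<Sum>i<n. W (indicator (A i))) = W (indicator (\<Union>i<n. A i))" for n
    proof (induction n)
      case 0
      then show ?case using W0 by simp
    next
      case (Suc n)
      have dj2: "(\<Union>i<n. A i) \<inter> A n = {}"
      proof (rule equals0I)
        fix x assume "x \<in> (\<Union>i<n. A i) \<inter> A n"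
        then obtain i where "i < n" "x \<in> A i" "x \<in> A n" by auto
        moreover have "i \<noteq> n" using \<open>i < n\<close> by simp
        ultimately have "x \<in> A i \<inter> A n" by simp
        moreover have "A i \<inter> A n = {}" using dj \<open>i \<noteq> n\<close> unfolding disjoint_family_on_def by blast
        ultimately show False by simp
      qed
      have "indicator (\<Union>i<Suc n. A i) = (\<lambda>x. indicator (\<Union>i<n. A i) x + indicator (A n) x :: real)"
        using dj2 by (auto simp: lessThan_Suc indicator_def fun_eq_iff)
      moreover have "(\<Union>i<n. A i) \<in> sets \<mu>" using A by auto
      ultimately have "W (indicator (\<Union>i<Suc n. A i)) = W (indicator (\<Union>i<n. A i)) + W (indicator (A n))"
        using A by (simp add: Wl(1) int_ind)
      then show ?case using Suc by simp
    qed
    have "(\<lambda>n. W (indicator (\<Union>i<n. A i))) \<longlonglongrightarrow> W (indicator (\<Union>i. A i))"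
    proof (rule W_cont)
      show "\<And>n. integrable \<mu> (indicator (\<Union>i<n. A i) :: 'b \<Rightarrow> real)" using A by (intro int_ind) auto
      show "integrable \<mu> (indicator (\<Union>i. A i) :: 'b \<Rightarrow> real)" using U by (intro int_ind) auto
      show "(\<lambda>n. \<integral>x. \<bar>indicator (\<Union>i<n. A i) x - indicator (\<Union>i. A i) x :: real\<bar> \<partial>\<mu>) \<longlonglongrightarrow> 0"
      proof (rule dct_L1[where w="\<lambda>x. 1"])
        show "\<And>n. integrable \<mu> (indicator (\<Union>i<n. A i) :: 'b \<Rightarrow> real)" using A by (intro int_ind) auto
        show "integrable \<mu> (indicator (\<Union>i. A i) :: 'b \<Rightarrow> real)" using U by (intro int_ind) auto
      qed (auto intro: LIMSEQ_indicator_UN)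
    qed
    then have "(\<lambda>i. W (indicator (A i))) sums W (indicator (\<Union>i. A i))"
      unfolding sums_def fin by simp
    then show "(\<Sum>i. \<nu> (A i)) = \<nu> (\<Union> (range A))"
      unfolding \<nu>_def using W_ind A U by (intro suminf_ennreal_eq) auto
  qed
  define N where "N \<equiv> measure_of (space \<mu>) (sets \<mu>) \<nu>"
  have pos: "positive (sets \<mu>) \<nu>" unfolding positive_def \<nu>_def
  proof -
    have e: "indicator {} = (\<lambda>x. 0::real)" by (simp add: fun_eq_iff)
    show "ennreal (W (indicator {})) = 0" unfolding e W0 by simp
  qed
  have eN: "emeasure N A = \<nu> A" if "A \<in> sets \<mu>" for A
    unfolding N_def by (rule emeasure_measure_of_sigma[OF sets.sigma_algebra_axioms pos ca that])
  have sN: "sets N = sets \<mu>" unfolding N_def by simp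
  have ac: "absolutely_continuous \<mu> N"
    unfolding absolutely_continuous_def
  proof
    fix A assume "A \<in> null_sets \<mu>"
    then have A: "A \<in> sets \<mu>" "measure \<mu> A = 0" by (auto simp: null_sets_def measure_def)
    then have "W (indicator A) = 0" using W_ind[OF A(1)] by simp
    then show "A \<in> null_sets N" using A eN sN by (simp add: \<nu>_def null_sets_def)
  qed
  define r where "r \<equiv> RN_deriv \<mu> N"
  have dens: "density \<mu> r = N" unfolding r_def using ac sN by (rule density_RN_deriv)
  have r_meas[measurable]: "r \<in> borel_measurable \<mu>" unfolding r_def by simp
  have eNr: "\<nu> A = (\<integral>\<^sup>+x. r x * indicator A x \<partial>\<mu>)" if "A \<in> sets \<mu>" for A
    using that eN[OF that] dens emeasure_density[OF r_meas that] by simp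
  define E where "E \<equiv> {x \<in> space \<mu>. ennreal (4 * C) < r x}"
  have E[measurable]: "E \<in> sets \<mu>" unfolding E_def by measurable
  have AEr: "AE x in \<mu>. r x \<le> ennreal (4 * C)"
  proof -
    have "AE x in \<mu>. r x * indicator E x \<le> ennreal (4 * C) * indicator E x"
    proof (rule ccontr)
      assume nAE: "\<not> (AE x in \<mu>. r x * indicator E x \<le> ennreal (4 * C) * indicator E x)"
      have "(\<integral>\<^sup>+x. ennreal (4 * C) * indicator E x \<partial>\<mu>) < (\<integral>\<^sup>+x. r x * indicator E x \<partial>\<mu>)"
      proof (rule nn_integral_less)
        show "(\<lambda>x. ennreal (4 * C) * indicator E x) \<in> borel_measurable \<mu>" by measurable
        show "(\<lambda>x. r x * indicator E x) \<in> borel_measurable \<mu>" by measurable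
        show "(\<integral>\<^sup>+x. ennreal (4 * C) * indicator E x \<partial>\<mu>) \<noteq> \<infinity>"
          using E by (simp add: nn_integral_cmult_indicator ennreal_mult_eq_top_iff)
        show "AE x in \<mu>. ennreal (4 * C) * indicator E x \<le> r x * indicator E x"
          by (intro AE_I2) (auto simp: E_def indicator_def less_imp_le)
      qed fact
      also have "\<dots> = \<nu> E" using eNr[OF E] by simp
      also have "\<dots> \<le> ennreal (4 * C * measure \<mu> E)"
        unfolding \<nu>_def using W_ind[OF E] by (simp add: ennreal_leI)
      also have "\<dots> = (\<integral>\<^sup>+x. ennreal (4 * C) * indicator E x \<partial>\<mu>)"
        using E C0 by (simp add: nn_integral_cmult_indicator emeasure_eq_measure ennreal_mult)
      finally show False by simp
    qed
    with AE_space show ?thesis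
    proof eventually_elim
      case (elim x)
      show ?case
      proof (rule ccontr)
        assume "\<not> r x \<le> ennreal (4 * C)"
        then have "x \<in> E" using elim unfolding E_def by (simp add: not_le)
        then show False using elim \<open>\<not> r x \<le> ennreal (4 * C)\<close> by simp
      qed
    qed
  qed
  define rr where "rr \<equiv> \<lambda>x. min (enn2real (r x)) (4 * C)"
  have rr_meas[measurable]: "rr \<in> borel_measurable \<mu>" unfolding rr_def by measurable
  have rr_bd: "0 \<le> rr x \<and> rr x \<le> 4 * C" for x unfolding rr_def using C0 by auto
  have AE_rr: "AE x in \<mu>. r x = ennreal (rr x)"
    using AEr
  proof eventually_elim
    case (elim x)
    have "r x < top" by (rule le_less_trans[OF elim ennreal_less_top])
    then have "r x = ennreal (enn2real (r x))" by simp
    moreover have "enn2real (r x) \<le> enn2real (ennreal (4 * C))"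
      using elim by (rule enn2real_mono) (rule ennreal_less_top)
    then have "enn2real (r x) \<le> 4 * C" using C0 by simp
    ultimately show ?case unfolding rr_def by simp
  qed
  have W_rr: "W (indicator A) = (\<integral>x. rr x * indicator A x \<partial>\<mu>)" if A: "A \<in> sets \<mu>" for A
  proof -
    have int: "integrable \<mu> (\<lambda>x. rr x * indicator A x)"
      using int_bmult[OF int_ind[OF A] rr_meas, of "4*C"] rr_bd by auto
    have "ennreal (W (indicator A)) = (\<integral>\<^sup>+x. r x * indicator A x \<partial>\<mu>)"
      using eNr[OF A] by (simp add: \<nu>_def)
    also have "\<dots> = (\<integral>\<^sup>+x. ennreal (rr x * indicator A x) \<partial>\<mu>)"
      using AE_rr by (intro nn_integral_cong_AE) (auto simp: indicator_def)
    also have "\<dots> = ennreal (\<integral>x. rr x * indicator A x \<partial>\<mu>)"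
      using int rr_bd by (intro nn_integral_eq_integral) auto
    finally show ?thesis
      using W_ind[OF A] rr_bd by (subst (asm) ennreal_inj) (auto intro!: integral_nonneg)
  qed
  have int_rr: "integrable \<mu> (\<lambda>x. rr x * k x)" if "integrable \<mu> k" for k
    using int_bmult[OF that rr_meas, of "4*C"] rr_bd by auto
  have W_int: "W k = (\<integral>x. rr x * k x \<partial>\<mu>)" if k: "integrable \<mu> k" for k
    using k
  proof (induction rule: integrable_induct)
    case (base A c)
    have "(\<lambda>x. indicator A x *\<^sub>R c) = (\<lambda>x. c * indicator A x)" by (auto simp: fun_eq_iff)
    then have "W (\<lambda>x. indicator A x *\<^sub>R c) = c * W (indicator A)"
      using Wl(2)[OF int_ind[OF base(1)], of c] by simp
    also have "\<dots> = c * (\<integral>x. rr x * indicator A x \<partial>\<mu>)" using W_rr[OF base(1)] by simp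
    also have "\<dots> = (\<integral>x. rr x * (indicator A x *\<^sub>R c) \<partial>\<mu>)"
      by (simp add: mult_ac)
    finally show ?case .
  next
    case (add f g)
    have "W (\<lambda>x. f x + g x) = W f + W g" using Wl(1) add by simp
    also have "\<dots> = (\<integral>x. rr x * f x + rr x * g x \<partial>\<mu>)"
      using add int_rr by (simp add: Bochner_Integration.integral_add)
    finally show ?case by (simp add: distrib_left)
  next
    case (lim f s)
    have bd: "\<And>i x. x \<in> space \<mu> \<Longrightarrow> \<bar>s i x\<bar> \<le> 2 * \<bar>f x\<bar>" using lim.hyps(3) by simp
    have 1: "(\<lambda>i. W (s i)) \<longlonglongrightarrow> W f"
      by (rule W_cont[OF lim.hyps(1) lim.hyps(4) dct_L1[where w="\<lambda>x. 2 * \<bar>f x\<bar>", OF lim.hyps(1) lim.hyps(4) _ lim.hyps(2) bd]]) (use lim.hyps(4) in auto)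
    have 2: "(\<lambda>i. \<integral>x. rr x * s i x \<partial>\<mu>) \<longlonglongrightarrow> (\<integral>x. rr x * f x \<partial>\<mu>)"
    proof (rule integral_dominated_convergence[where w="\<lambda>x. 4 * C * (2 * \<bar>f x\<bar>)"])
      show "integrable \<mu> (\<lambda>x. 4 * C * (2 * \<bar>f x\<bar>))" using lim.hyps(4) by auto
      show "(\<lambda>x. rr x * f x) \<in> borel_measurable \<mu>" using lim.hyps(4) by measurable
      show "\<And>i. (\<lambda>x. rr x * s i x) \<in> borel_measurable \<mu>" using lim.hyps(1) by measurable
      show "AE x in \<mu>. (\<lambda>i. rr x * s i x) \<longlonglongrightarrow> rr x * f x"
        using lim.hyps(2) by (intro AE_I2 tendsto_mult_left) auto
      show "\<And>i. AE x in \<mu>. norm (rr x * s i x) \<le> 4 * C * (2 * \<bar>f x\<bar>)"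
      proof (intro AE_I2)
        fix i x assume x: "x \<in> space \<mu>"
        have "\<bar>rr x\<bar> * \<bar>s i x\<bar> \<le> (4 * C) * (2 * \<bar>f x\<bar>)"
          using rr_bd[of x] bd[OF x, of i] by (intro mult_mono) auto
        then show "norm (rr x * s i x) \<le> 4 * C * (2 * \<bar>f x\<bar>)" by (simp add: abs_mult)
      qed
    qed
    from 1 have "(\<lambda>i. \<integral>x. rr x * s i x \<partial>\<mu>) \<longlonglongrightarrow> W f" using lim.IH by simp
    from LIMSEQ_unique[OF this 2] show ?case .
  qed
  define c where "c \<equiv> (\<integral>x. rr x \<partial>\<mu>)"
  have int_rr1: "integrable \<mu> rr"
    using rr_bd by (intro integrable_const_bound[where B="4*C"]) auto
  show ?thesis
  proof (intro exI conjI)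
    show "(\<lambda>x. rr x - c) \<in> borel_measurable \<mu>" by measurable
    show "\<forall>x. \<bar>rr x - c\<bar> \<le> 4 * C + \<bar>c\<bar>" using rr_bd by (smt (verit))
    show "(\<integral>x. rr x - c \<partial>\<mu>) = 0" using int_rr1 by (simp add: c_def prob_space)
    show "\<forall>k\<in>L1_0 \<mu>. lam k = (\<integral>x. (rr x - c) * k x \<partial>\<mu>)"
    proof
      fix k assume k: "k \<in> L1_0 \<mu>"
      then have ki: "integrable \<mu> k" and k0: "integral\<^sup>L \<mu> k = 0" by (auto simp: L1_0_def)
      have "lam k = W k" using Wl(6)[OF k] by simp
      also have "\<dots> = (\<integral>x. rr x * k x \<partial>\<mu>)" by (rule W_int[OF ki])
      also have "\<dots> = (\<integral>x. rr x * k x \<partial>\<mu>) - c * integral\<^sup>L \<mu> k" using k0 by simp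
      also have "\<dots> = (\<integral>x. rr x * k x - c * k x \<partial>\<mu>)"
        using ki int_rr[OF ki] by (simp add: Bochner_Integration.integral_diff)
      also have "\<dots> = (\<integral>x. (rr x - c) * k x \<partial>\<mu>)" by (simp add: left_diff_distrib)
      finally show "lam k = (\<integral>x. (rr x - c) * k x \<partial>\<mu>)" .
    qed
  qed
qed



lemma uniq_bounded:
  assumes P: "prob_space M" and h1: "has_DF M F (\<lambda>_. 1) l1" and h2: "has_DF M F (\<lambda>_. 1) l2"
    and \<eta>: "\<eta> \<in> L1_0 M" and B: "B > 0" "\<And>x. x \<in> space M \<Longrightarrow> \<bar>\<eta> x\<bar> \<le> B"
  shows "l1 \<eta> = l2 \<eta>"
proof -
  interpret prob_space M by fact
  have cl1: "cont_lin_L1_0 M l1" and cl2: "cont_lin_L1_0 M l2" using h1 h2 by (auto simp: has_DF_def)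
  have ei: "integrable M \<eta>" and e0: "integral\<^sup>L M \<eta> = 0" using \<eta> by (auto simp: L1_0_def)
  define n where "n \<equiv> L1_norm M \<eta>"
  have n0: "n \<ge> 0" unfolding n_def L1_norm_def by simp
  have key: "\<bar>l1 \<eta> - l2 \<eta>\<bar> \<le> 2 * \<epsilon> * n" if e: "\<epsilon> > 0" for \<epsilon>
  proof -
    obtain d1 where d1: "d1 > 0" "\<forall>L''\<in>dens_set M. L1_norm M (\<lambda>\<omega>. L'' \<omega> - 1) < d1 \<longrightarrow>
        \<bar>F L'' - F (\<lambda>_. 1) - l1 (\<lambda>\<omega>. L'' \<omega> - 1)\<bar> \<le> \<epsilon> * L1_norm M (\<lambda>\<omega>. L'' \<omega> - 1)"
      using h1 e unfolding has_DF_def by blast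
    obtain d2 where d2: "d2 > 0" "\<forall>L''\<in>dens_set M. L1_norm M (\<lambda>\<omega>. L'' \<omega> - 1) < d2 \<longrightarrow>
        \<bar>F L'' - F (\<lambda>_. 1) - l2 (\<lambda>\<omega>. L'' \<omega> - 1)\<bar> \<le> \<epsilon> * L1_norm M (\<lambda>\<omega>. L'' \<omega> - 1)"
      using h2 e unfolding has_DF_def by blast
    define t where "t \<equiv> min (1 / (2 * B)) (min d1 d2 / (2 * (n + 1)))"
    have t0: "t > 0" unfolding t_def using B d1 d2 n0 by auto
    have tB: "t * B \<le> 1 / 2"
    proof -
      have "t \<le> 1 / (2 * B)" unfolding t_def by simp
      then have "t * B \<le> 1 / (2 * B) * B" using B by (intro mult_right_mono) auto
      then show ?thesis using B by simp
    qed
    define L'' where "L'' \<equiv> \<lambda>\<omega>. 1 + t * \<eta> \<omega>"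
    have diff: "(\<lambda>\<omega>. L'' \<omega> - 1) = (\<lambda>\<omega>. t * \<eta> \<omega>)" unfolding L''_def by simp
    have nt: "L1_norm M (\<lambda>\<omega>. L'' \<omega> - 1) = t * n"
      unfolding diff L1_norm_def n_def using t0 by (simp add: abs_mult)
    have tn: "t * n < min d1 d2"
    proof -
      have "t \<le> min d1 d2 / (2 * (n + 1))" unfolding t_def by simp
      then have "t * n \<le> min d1 d2 / (2 * (n + 1)) * n" using n0 by (intro mult_right_mono) auto
      also have "\<dots> = min d1 d2 * (n / (2 * (n + 1)))" by simp
      also have "\<dots> < min d1 d2 * 1"
      proof (rule mult_strict_left_mono)
        show "n / (2 * (n + 1)) < 1" using n0 by (simp add: divide_less_eq)
        show "0 < min d1 d2" using d1 d2 by simp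
      qed
      also have "\<dots> = min d1 d2" by simp
      finally show ?thesis .
    qed
    have Ld: "L'' \<in> dens_set M"
      unfolding dens_set_def
    proof (intro CollectI conjI)
      show "integrable M L''" unfolding L''_def using ei by auto
      show "integral\<^sup>L M L'' = 1" unfolding L''_def using ei e0 by (simp add: prob_space)
      show "AE \<omega> in M. 0 < L'' \<omega>"
      proof (intro AE_I2)
        fix x assume x: "x \<in> space M"
        have "\<bar>t * \<eta> x\<bar> \<le> t * B" using B(2)[OF x] t0 by (simp add: abs_mult mult_left_mono)
        then show "0 < L'' x" unfolding L''_def using tB by linarith
      qed
    qed
    have a1: "\<bar>F L'' - F (\<lambda>_. 1) - t * l1 \<eta>\<bar> \<le> \<epsilon> * (t * n)"
    proof -
      have "\<bar>F L'' - F (\<lambda>_. 1) - l1 (\<lambda>\<omega>. L'' \<omega> - 1)\<bar> \<le> \<epsilon> * L1_norm M (\<lambda>\<omega>. L'' \<omega> - 1)"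
        using d1(2)[rule_format, OF Ld] tn nt diff by simp
      then show ?thesis using nt cl_mult[OF cl1 \<eta>, of t] unfolding diff by simp
    qed
    have a2: "\<bar>F L'' - F (\<lambda>_. 1) - t * l2 \<eta>\<bar> \<le> \<epsilon> * (t * n)"
    proof -
      have "\<bar>F L'' - F (\<lambda>_. 1) - l2 (\<lambda>\<omega>. L'' \<omega> - 1)\<bar> \<le> \<epsilon> * L1_norm M (\<lambda>\<omega>. L'' \<omega> - 1)"
        using d2(2)[rule_format, OF Ld] tn nt diff by simp
      then show ?thesis using nt cl_mult[OF cl2 \<eta>, of t] unfolding diff by simp
    qed
    have "\<bar>t * l1 \<eta> - t * l2 \<eta>\<bar> \<le> 2 * (\<epsilon> * (t * n))" using a1 a2 by linarith
    then have "t * \<bar>l1 \<eta> - l2 \<eta>\<bar> \<le> t * (2 * \<epsilon> * n)"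
      using t0 by (simp add: abs_mult right_diff_distrib[symmetric] mult_ac)
    then show ?thesis using t0 by simp
  qed
  show ?thesis
  proof (rule ccontr)
    assume ne: "l1 \<eta> \<noteq> l2 \<eta>"
    define e where "e \<equiv> \<bar>l1 \<eta> - l2 \<eta>\<bar> / (2 * (2 * n + 1))"
    have e0: "e > 0" unfolding e_def using ne n0 by auto
    have "\<bar>l1 \<eta> - l2 \<eta>\<bar> \<le> 2 * e * n" by (rule key[OF e0])
    also have "\<dots> < \<bar>l1 \<eta> - l2 \<eta>\<bar>"
      unfolding e_def using ne n0 by (simp add: field_simps) (simp add: add_pos_nonneg)
    finally show False by simp
  qed
qed


lemma uniq_DF:
  assumes P: "prob_space M" and h1: "has_DF M F (\<lambda>_. 1) l1" and h2: "has_DF M F (\<lambda>_. 1) l2"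
    and \<eta>: "\<eta> \<in> L1_0 M"
  shows "l1 \<eta> = l2 \<eta>"
proof -
  interpret prob_space M by fact
  have cl1: "cont_lin_L1_0 M l1" and cl2: "cont_lin_L1_0 M l2" using h1 h2 by (auto simp: has_DF_def)
  obtain C1 where C1: "C1 \<ge> 0" "\<forall>\<eta>\<in>L1_0 M. \<bar>l1 \<eta>\<bar> \<le> C1 * L1_norm M \<eta>" using cl_bound[OF cl1] by blast
  obtain C2 where C2: "C2 \<ge> 0" "\<forall>\<eta>\<in>L1_0 M. \<bar>l2 \<eta>\<bar> \<le> C2 * L1_norm M \<eta>" using cl_bound[OF cl2] by blast
  have ei[measurable]: "integrable M \<eta>" and e0: "integral\<^sup>L M \<eta> = 0" using \<eta> by (auto simp: L1_0_def)
  have em[measurable]: "\<eta> \<in> borel_measurable M" using ei by simp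
  define tr where "tr \<equiv> \<lambda>(m::nat) x. max (- real m) (min (real m) (\<eta> x))"
  define z where "z \<equiv> \<lambda>m x. tr m x - integral\<^sup>L M (tr m)"
  have tr_int: "integrable M (tr m)" for m
    unfolding tr_def by (rule integrable_const_bound[where B="real m"]) auto
  have tr_bd: "\<bar>tr m x\<bar> \<le> \<bar>\<eta> x\<bar>" for m x unfolding tr_def by auto
  have tr_lim: "(\<lambda>m. tr m x) \<longlonglongrightarrow> \<eta> x" for x
  proof (rule tendsto_eventually)
    show "\<forall>\<^sub>F m in sequentially. tr m x = \<eta> x"
      unfolding eventually_sequentially
    proof (intro exI allI impI)
      fix m assume "nat \<lceil>\<bar>\<eta> x\<bar>\<rceil> \<le> m"
      then have "\<bar>\<eta> x\<bar> \<le> real m" by linarith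
      then show "tr m x = \<eta> x" unfolding tr_def by auto
    qed
  qed
  have z_L10: "z m \<in> L1_0 M" for m
    unfolding z_def L1_0_def using tr_int[of m] by (simp add: prob_space)
  have z_eq: "l1 (z m) = l2 (z m)" for m
  proof (rule uniq_bounded[OF P h1 h2 z_L10])
    show "0 < 2 * real m + 1" by simp
    fix x assume "x \<in> space M"
    have "\<bar>integral\<^sup>L M (tr m)\<bar> \<le> (\<integral>x. \<bar>tr m x\<bar> \<partial>M)"
      using integral_norm_bound[of M "tr m"] by simp
    also have "\<dots> \<le> (\<integral>x. real m \<partial>M)"
      using tr_int[of m] by (intro integral_mono) (auto simp: tr_def)
    also have "\<dots> = real m" by (simp add: prob_space)
    finally have "\<bar>integral\<^sup>L M (tr m)\<bar> \<le> real m" .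
    moreover have "\<bar>tr m x\<bar> \<le> real m" unfolding tr_def by auto
    ultimately show "\<bar>z m x\<bar> \<le> 2 * real m + 1" unfolding z_def by linarith
  qed
  have a: "(\<lambda>m. \<integral>x. \<bar>tr m x - \<eta> x\<bar> \<partial>M) \<longlonglongrightarrow> 0"
    by (rule dct_L1[where w="\<lambda>x. \<bar>\<eta> x\<bar>"]) (use tr_int tr_lim tr_bd ei in auto)
  have b: "(\<lambda>m. integral\<^sup>L M (tr m)) \<longlonglongrightarrow> integral\<^sup>L M \<eta>"
    by (rule integral_dominated_convergence[where w="\<lambda>x. \<bar>\<eta> x\<bar>"])
       (use tr_int tr_lim tr_bd ei in auto)
  have bd: "\<bar>l1 \<eta> - l2 \<eta>\<bar> \<le> (C1 + C2) * ((\<integral>x. \<bar>tr m x - \<eta> x\<bar> \<partial>M) + \<bar>integral\<^sup>L M (tr m)\<bar>)" for m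
  proof -
    have d: "(\<lambda>x. \<eta> x - z m x) \<in> L1_0 M" using L1_0_diff[OF \<eta> z_L10] .
    have "l1 \<eta> - l2 \<eta> = l1 (\<lambda>x. \<eta> x - z m x) - l2 (\<lambda>x. \<eta> x - z m x)"
      using cl_diff[OF cl1 \<eta> z_L10] cl_diff[OF cl2 \<eta> z_L10] z_eq[of m] by simp
    moreover have "L1_norm M (\<lambda>x. \<eta> x - z m x) \<le> (\<integral>x. \<bar>tr m x - \<eta> x\<bar> \<partial>M) + \<bar>integral\<^sup>L M (tr m)\<bar>"
    proof -
      have "L1_norm M (\<lambda>x. \<eta> x - z m x) \<le> (\<integral>x. \<bar>tr m x - \<eta> x\<bar> + \<bar>integral\<^sup>L M (tr m)\<bar> \<partial>M)"
        unfolding L1_norm_def z_def using tr_int[of m] ei by (intro integral_mono) auto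
      also have "\<dots> = (\<integral>x. \<bar>tr m x - \<eta> x\<bar> \<partial>M) + \<bar>integral\<^sup>L M (tr m)\<bar>"
        using tr_int[of m] ei by (simp add: Bochner_Integration.integral_add prob_space)
      finally show ?thesis .
    qed
    moreover have "L1_norm M (\<lambda>x. \<eta> x - z m x) \<ge> 0" unfolding L1_norm_def by simp
    ultimately show ?thesis using C1 C2 d
      by (smt (verit, best) mult_left_mono distrib_right)
  qed
  have "(\<lambda>m. (C1 + C2) * ((\<integral>x. \<bar>tr m x - \<eta> x\<bar> \<partial>M) + \<bar>integral\<^sup>L M (tr m)\<bar>)) \<longlonglongrightarrow> (C1 + C2) * (0 + \<bar>0\<bar>)"
    using a b e0 by (intro tendsto_intros) auto
  then have "\<bar>l1 \<eta> - l2 \<eta>\<bar> \<le> 0"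
    using bd by (intro tendsto_le[OF trivial_limit_sequentially _ tendsto_const]) auto
  then show ?thesis by simp
qed



lemma dens_prob:
  assumes P: "prob_space M" and L: "L \<in> dens_set M"
  shows "prob_space (density M (\<lambda>\<omega>. ennreal (L \<omega>)))"
proof (rule prob_spaceI)
  have Li: "integrable M L" and Lp: "AE \<omega> in M. 0 < L \<omega>" and L1: "integral\<^sup>L M L = 1"
    using L by (auto simp: dens_set_def)
  have Lm[measurable]: "L \<in> borel_measurable M" using Li by simp
  have "emeasure (density M (\<lambda>\<omega>. ennreal (L \<omega>))) (space (density M (\<lambda>\<omega>. ennreal (L \<omega>))))
      = (\<integral>\<^sup>+ x. ennreal (L x) * indicator (space M) x \<partial>M)"
    by (simp add: emeasure_density)
  also have "\<dots> = (\<integral>\<^sup>+ x. ennreal (L x) \<partial>M)"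
    by (intro nn_integral_cong) (simp add: indicator_def)
  also have "\<dots> = ennreal (integral\<^sup>L M L)"
    using Li Lp by (intro nn_integral_eq_integral) (auto elim: eventually_mono)
  finally show "emeasure (density M (\<lambda>\<omega>. ennreal (L \<omega>))) (space (density M (\<lambda>\<omega>. ennreal (L \<omega>)))) = 1"
    using L1 by simp
qed

lemma transfer:
  fixes X :: "'a \<Rightarrow> 'b::topological_space" and Lh :: "'a \<Rightarrow> real"
  assumes P: "prob_space M" and X[measurable]: "X \<in> measurable M borel" and Lh: "Lh \<in> dens_set M"
  shows "\<exists>k. k \<in> borel_measurable borel \<and> (\<forall>x. 0 \<le> k x) \<and>
     integrable (distr M borel X) k \<and> integral\<^sup>L (distr M borel X) k = 1 \<and>
     (AE x in distr M borel X. 0 < k x) \<and>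
     distr (density M (\<lambda>\<omega>. ennreal (Lh \<omega>))) borel X = density (distr M borel X) (\<lambda>x. ennreal (k x)) \<and>
     (\<forall>h. h \<in> borel_measurable borel \<longrightarrow> (\<exists>B. \<forall>x. \<bar>h x\<bar> \<le> B) \<longrightarrow>
        (\<integral>\<omega>. h (X \<omega>) * Lh \<omega> \<partial>M) = (\<integral>x. h x * k x \<partial>distr M borel X))"
proof -
  interpret prob_space M by fact
  have Li: "integrable M Lh" and Lp: "AE \<omega> in M. 0 < Lh \<omega>" and L1: "integral\<^sup>L M Lh = 1"
    using Lh by (auto simp: dens_set_def)
  have Lm[measurable]: "Lh \<in> borel_measurable M" using Li by simp
  define \<mu> where "\<mu> \<equiv> distr M borel X"
  define D where "D \<equiv> density M (\<lambda>\<omega>. ennreal (Lh \<omega>))"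
  define \<nu> where "\<nu> \<equiv> distr D borel X"
  interpret mu: prob_space \<mu> unfolding \<mu>_def by (rule prob_space_distr) simp
  interpret D: prob_space D unfolding D_def by (rule dens_prob[OF P Lh])
  interpret nu: prob_space \<nu> unfolding \<nu>_def by (rule D.prob_space_distr) (simp add: D_def)
  have s_mu[simp]: "sets \<mu> = sets borel" unfolding \<mu>_def by simp
  have s_nu[simp]: "sets \<nu> = sets borel" unfolding \<nu>_def by simp
  have m_mu[simp]: "measurable \<mu> N = measurable borel N" for N :: "'c measure"
    by (rule measurable_cong_sets) auto
  have ac: "absolutely_continuous \<mu> \<nu>"
    unfolding absolutely_continuous_def
  proof
    fix A assume "A \<in> null_sets \<mu>"
    then have A: "A \<in> sets borel" "emeasure M (X -` A \<inter> space M) = 0"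
      by (auto simp: \<mu>_def null_sets_def emeasure_distr)
    then have "X -` A \<inter> space M \<in> null_sets M" by (auto simp: null_sets_def)
    then have "X -` A \<inter> space M \<in> null_sets D"
      using absolutely_continuousI_density[of "\<lambda>\<omega>. ennreal (Lh \<omega>)" M]
      unfolding D_def absolutely_continuous_def by auto
    then show "A \<in> null_sets \<nu>" using A unfolding \<nu>_def
      by (auto simp: null_sets_def emeasure_distr D_def)
  qed
  define r where "r \<equiv> RN_deriv \<mu> \<nu>"
  have r_meas[measurable]: "r \<in> borel_measurable borel"
  proof -
    have "RN_deriv \<mu> \<nu> \<in> borel_measurable \<mu>" by (rule borel_measurable_RN_deriv)
    then show ?thesis unfolding r_def measurable_cong_sets[OF s_mu refl] .
  qed
  have dens: "density \<mu> r = \<nu>" unfolding r_def by (rule mu.density_RN_deriv[OF ac]) simp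
  have fin: "AE x in \<mu>. r x \<noteq> \<infinity>" unfolding r_def
    by (rule mu.RN_deriv_finite[OF _ ac]) (auto intro: nu.sigma_finite_measure)
  define k where "k \<equiv> \<lambda>x. enn2real (r x)"
  have k_meas[measurable]: "k \<in> borel_measurable borel" unfolding k_def by measurable
  have k0: "\<forall>x. 0 \<le> k x" unfolding k_def by simp
  have dk: "density \<mu> (\<lambda>x. ennreal (k x)) = \<nu>"
  proof -
    have "density \<mu> (\<lambda>x. ennreal (k x)) = density \<mu> r"
      using fin by (intro density_cong) (auto simp: k_def less_top elim: eventually_mono)
    then show ?thesis using dens by simp
  qed
  have ident: "(\<integral>\<omega>. h (X \<omega>) * Lh \<omega> \<partial>M) = (\<integral>x. h x * k x \<partial>\<mu>)"
    if h[measurable]: "h \<in> borel_measurable borel" for h :: "'b \<Rightarrow> real"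
  proof -
    have "(\<integral>\<omega>. h (X \<omega>) * Lh \<omega> \<partial>M) = (\<integral>\<omega>. Lh \<omega> *\<^sub>R h (X \<omega>) \<partial>M)" by (simp add: mult.commute)
    also have "\<dots> = (\<integral>\<omega>. h (X \<omega>) \<partial>D)"
      unfolding D_def using Lp by (intro integral_density[symmetric]) (auto elim: eventually_mono)
    also have "\<dots> = (\<integral>x. h x \<partial>\<nu>)" unfolding \<nu>_def
      by (intro integral_distr[symmetric]) (auto simp: D_def)
    also have "\<dots> = (\<integral>x. h x \<partial>density \<mu> (\<lambda>x. ennreal (k x)))" using dk by simp
    also have "\<dots> = (\<integral>x. k x *\<^sub>R h x \<partial>\<mu>)"
      using k0 by (intro integral_density) auto
    finally show ?thesis by (simp add: mult.commute)
  qed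
  have kint: "integrable \<mu> k"
  proof -
    have "integrable (density \<mu> (\<lambda>x. ennreal (k x))) (\<lambda>x. 1::real)" using dk by simp
    then have "integrable \<mu> (\<lambda>x. k x *\<^sub>R (1::real))"
      using k0 by (subst (asm) integrable_density) auto
    then show ?thesis by simp
  qed
  have kI: "integral\<^sup>L \<mu> k = 1" using ident[of "\<lambda>_. 1"] L1 by simp
  have kpos: "AE x in \<mu>. 0 < k x"
  proof -
    define Z where "Z \<equiv> {x. k x = 0}"
    have Z[measurable]: "Z \<in> sets borel" unfolding Z_def by measurable
    have "(\<integral>\<omega>. indicator Z (X \<omega>) * Lh \<omega> \<partial>M) = (\<integral>x. indicator Z x * k x \<partial>\<mu>)"
      by (rule ident) simp
    also have "\<dots> = 0" by (intro integral_eq_zero_AE AE_I2) (auto simp: Z_def indicator_def)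
    finally have I0: "(\<integral>\<omega>. indicator Z (X \<omega>) * Lh \<omega> \<partial>M) = 0" .
    have int: "integrable M (\<lambda>\<omega>. indicator Z (X \<omega>) * Lh \<omega>)"
      by (rule int_bmult[OF Li, of _ 1]) auto
    have nn: "AE \<omega> in M. 0 \<le> indicator Z (X \<omega>) * Lh \<omega>"
      using Lp by (auto elim: eventually_mono)
    have "AE \<omega> in M. indicator Z (X \<omega>) * Lh \<omega> = 0"
      using integral_nonneg_eq_0_iff_AE[OF int nn] I0 by simp
    then have "AE \<omega> in M. k (X \<omega>) \<noteq> 0"
      using Lp by eventually_elim (auto simp: Z_def indicator_def)
    then have "AE x in \<mu>. k x \<noteq> 0" unfolding \<mu>_def by (subst AE_distr_iff) auto
    then show ?thesis using k0 by (auto elim: eventually_mono simp: less_le)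
  qed
  show ?thesis
    apply (rule exI[of _ k])
    using k_meas k0 kint kI kpos dk[symmetric] ident unfolding \<mu>_def \<nu>_def D_def by blast
qed



lemma int_aebmult:
  fixes f g :: "'a \<Rightarrow> real"
  assumes "integrable M f" "g \<in> borel_measurable M" "AE x in M. \<bar>g x\<bar> \<le> B"
  shows "integrable M (\<lambda>x. g x * f x)"
proof (rule Bochner_Integration.integrable_bound[where f="\<lambda>x. B * f x"])
  show "integrable M (\<lambda>x. B * f x)" using assms(1) by simp
  show "(\<lambda>x. g x * f x) \<in> borel_measurable M" using assms by measurable
  show "AE x in M. norm (g x * f x) \<le> norm (B * f x)"
    using assms(3)
  proof eventually_elim
    case (elim x)
    then have "\<bar>g x\<bar> * \<bar>f x\<bar> \<le> \<bar>B\<bar> * \<bar>f x\<bar>" by (intro mult_right_mono) auto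
    then show ?case by (simp add: abs_mult)
  qed
qed

lemma core_DF:
  fixes \<xi> :: "'a \<Rightarrow> 'b::topological_space" and X :: "'c \<Rightarrow> 'b"
  assumes P0: "prob_space M0" and \<xi>[measurable]: "\<xi> \<in> measurable M0 borel"
    and P: "prob_space M" and X[measurable]: "X \<in> measurable M borel"
    and law: "distr M borel X = distr M0 borel \<xi>"
    and h0: "has_DF M0 (F_fun f \<xi> M0) (\<lambda>_. 1) l0"
    and g[measurable]: "g \<in> borel_measurable borel" and gB: "\<forall>x. \<bar>g x\<bar> \<le> B"
    and R: "\<forall>k\<in>L1_0 (distr M0 borel \<xi>). l0 (\<lambda>\<omega>. k (\<xi> \<omega>)) = (\<integral>x. g x * k x \<partial>distr M0 borel \<xi>)"
  shows "has_DF M (F_fun f X M) (\<lambda>_. 1) (\<lambda>\<eta>. \<integral>\<omega>. g (X \<omega>) * \<eta> \<omega> \<partial>M)"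
proof -
  interpret M0: prob_space M0 by fact
  interpret prob_space M by fact
  define \<mu> where "\<mu> \<equiv> distr M0 borel \<xi>"
  interpret mu: prob_space \<mu> unfolding \<mu>_def by (rule M0.prob_space_distr) simp
  have B0: "B \<ge> 0" using gB by (meson abs_ge_zero order_trans)
  have gX_int: "integrable M (\<lambda>\<omega>. g (X \<omega>) * \<eta> \<omega>)" if "integrable M \<eta>" for \<eta>
    by (rule int_bmult[OF that, of _ B]) (use gB in auto)
  have cl: "cont_lin_L1_0 M (\<lambda>\<eta>. \<integral>\<omega>. g (X \<omega>) * \<eta> \<omega> \<partial>M)"
    unfolding cont_lin_L1_0_def
  proof (intro conjI ballI allI)
    fix a b assume a: "a \<in> L1_0 M" and b: "b \<in> L1_0 M"
    then have "integrable M a" "integrable M b" by (auto simp: L1_0_def)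
    then show "(\<integral>\<omega>. g (X \<omega>) * (a \<omega> + b \<omega>) \<partial>M) = (\<integral>\<omega>. g (X \<omega>) * a \<omega> \<partial>M) + (\<integral>\<omega>. g (X \<omega>) * b \<omega> \<partial>M)"
      using gX_int by (simp add: distrib_left Bochner_Integration.integral_add)
  next
    fix c a
    show "(\<integral>\<omega>. g (X \<omega>) * (c * a \<omega>) \<partial>M) = c * (\<integral>\<omega>. g (X \<omega>) * a \<omega> \<partial>M)"
      by (simp add: mult.left_commute)
  next
    show "\<exists>C. \<forall>\<eta>\<in>L1_0 M. \<bar>\<integral>\<omega>. g (X \<omega>) * \<eta> \<omega> \<partial>M\<bar> \<le> C * L1_norm M \<eta>"
    proof (intro exI ballI)
      fix \<eta> assume "\<eta> \<in> L1_0 M"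
      then have ei: "integrable M \<eta>" by (auto simp: L1_0_def)
      have "\<bar>\<integral>\<omega>. g (X \<omega>) * \<eta> \<omega> \<partial>M\<bar> \<le> (\<integral>\<omega>. \<bar>g (X \<omega>) * \<eta> \<omega>\<bar> \<partial>M)"
        using integral_norm_bound[of M "\<lambda>\<omega>. g (X \<omega>) * \<eta> \<omega>"] by simp
      also have "\<dots> \<le> (\<integral>\<omega>. B * \<bar>\<eta> \<omega>\<bar> \<partial>M)"
        using integrable_abs[OF gX_int[OF ei]] ei gB by (intro integral_mono) (auto simp: abs_mult intro: mult_right_mono)
      also have "\<dots> = B * L1_norm M \<eta>" by (simp add: L1_norm_def)
      finally show "\<bar>\<integral>\<omega>. g (X \<omega>) * \<eta> \<omega> \<partial>M\<bar> \<le> B * L1_norm M \<eta>" .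
    qed
  qed
  have F1: "F_fun f X M (\<lambda>_. 1) = F_fun f \<xi> M0 (\<lambda>_. 1)"
    unfolding F_fun_def law_under_def using law by (simp add: density_1)
  show ?thesis
    unfolding has_DF_def
  proof (intro conjI cl allI impI)
    fix \<epsilon> :: real assume e: "\<epsilon> > 0"
    obtain \<delta> where d: "\<delta> > 0" "\<forall>L''\<in>dens_set M0. L1_norm M0 (\<lambda>\<omega>. L'' \<omega> - 1) < \<delta> \<longrightarrow>
        \<bar>F_fun f \<xi> M0 L'' - F_fun f \<xi> M0 (\<lambda>_. 1) - l0 (\<lambda>\<omega>. L'' \<omega> - 1)\<bar> \<le> \<epsilon> * L1_norm M0 (\<lambda>\<omega>. L'' \<omega> - 1)"
      using h0 e unfolding has_DF_def by blast
    show "\<exists>\<delta>>0. \<forall>L''\<in>dens_set M. L1_norm M (\<lambda>\<omega>. L'' \<omega> - 1) < \<delta> \<longrightarrow>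
        \<bar>F_fun f X M L'' - F_fun f X M (\<lambda>_. 1) - (\<integral>\<omega>. g (X \<omega>) * (L'' \<omega> - 1) \<partial>M)\<bar> \<le> \<epsilon> * L1_norm M (\<lambda>\<omega>. L'' \<omega> - 1)"
    proof (intro exI[of _ \<delta>] conjI d(1) ballI impI)
      fix Lh assume Lh: "Lh \<in> dens_set M" and small: "L1_norm M (\<lambda>\<omega>. Lh \<omega> - 1) < \<delta>"
      have Li: "integrable M Lh" using Lh by (auto simp: dens_set_def)
      obtain k where k[measurable]: "k \<in> borel_measurable borel" and k0: "\<forall>x. 0 \<le> k x"
        and ki: "integrable \<mu> k" and k1: "integral\<^sup>L \<mu> k = 1" and kp: "AE x in \<mu>. 0 < k x"
        and kd: "distr (density M (\<lambda>\<omega>. ennreal (Lh \<omega>))) borel X = density \<mu> (\<lambda>x. ennreal (k x))"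
        and kid: "\<And>h. h \<in> borel_measurable borel \<Longrightarrow> (\<exists>B. \<forall>x. \<bar>h x\<bar> \<le> B) \<Longrightarrow>
                 (\<integral>\<omega>. h (X \<omega>) * Lh \<omega> \<partial>M) = (\<integral>x. h x * k x \<partial>\<mu>)"
        using transfer[OF P X Lh] unfolding law \<mu>_def[symmetric] by blast
      have hid: "(\<integral>\<omega>. h (X \<omega>) * (Lh \<omega> - 1) \<partial>M) = (\<integral>x. h x * (k x - 1) \<partial>\<mu>)"
        if h[measurable]: "h \<in> borel_measurable borel" and hB: "\<forall>x. \<bar>h x\<bar> \<le> Bh" for h Bh
      proof -
        have hi: "integrable \<mu> h"
          by (rule mu.integrable_const_bound[of _ Bh]) (use hB in \<open>auto simp: \<mu>_def\<close>)
        have hki: "integrable \<mu> (\<lambda>x. h x * k x)"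
          by (rule int_bmult[OF ki, of _ Bh]) (use hB in \<open>auto simp: \<mu>_def\<close>)
        have hXi: "integrable M (\<lambda>\<omega>. h (X \<omega>))"
          by (rule integrable_const_bound[of _ Bh]) (use hB in auto)
        have hXL: "integrable M (\<lambda>\<omega>. h (X \<omega>) * Lh \<omega>)"
          by (rule int_bmult[OF Li, of _ Bh]) (use hB in auto)
        have "(\<integral>\<omega>. h (X \<omega>) * (Lh \<omega> - 1) \<partial>M) = (\<integral>\<omega>. h (X \<omega>) * Lh \<omega> \<partial>M) - (\<integral>\<omega>. h (X \<omega>) \<partial>M)"
          using hXi hXL by (simp add: right_diff_distrib Bochner_Integration.integral_diff)
        also have "(\<integral>\<omega>. h (X \<omega>) \<partial>M) = (\<integral>x. h x \<partial>\<mu>)"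
          unfolding \<mu>_def law[symmetric] by (rule integral_distr[symmetric]) auto
        also have "(\<integral>\<omega>. h (X \<omega>) * Lh \<omega> \<partial>M) = (\<integral>x. h x * k x \<partial>\<mu>)"
          using kid[OF h] hB by blast
        also have "(\<integral>x. h x * k x \<partial>\<mu>) - (\<integral>x. h x \<partial>\<mu>) = (\<integral>x. h x * (k x - 1) \<partial>\<mu>)"
          using hi hki by (simp add: right_diff_distrib Bochner_Integration.integral_diff)
        finally show ?thesis .
      qed
      define L'' where "L'' \<equiv> \<lambda>\<omega>. k (\<xi> \<omega>)"
      have L''d: "L'' \<in> dens_set M0"
        unfolding dens_set_def L''_def
      proof (intro CollectI conjI)
        show "integrable M0 (\<lambda>\<omega>. k (\<xi> \<omega>))" using ki unfolding \<mu>_def by (subst (asm) integrable_distr_eq) auto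
        show "AE \<omega> in M0. 0 < k (\<xi> \<omega>)" using kp unfolding \<mu>_def by (subst (asm) AE_distr_iff) auto
        show "integral\<^sup>L M0 (\<lambda>\<omega>. k (\<xi> \<omega>)) = 1" using k1 unfolding \<mu>_def by (subst (asm) integral_distr) auto
      qed
      have FL: "F_fun f \<xi> M0 L'' = F_fun f X M Lh"
        unfolding F_fun_def law_under_def L''_def kd \<mu>_def by (subst density_distr) auto
      define sg where "sg \<equiv> \<lambda>x. if 1 \<le> k x then 1 else (-1::real)"
      have sg[measurable]: "sg \<in> borel_measurable borel" unfolding sg_def by measurable
      have nL: "L1_norm M0 (\<lambda>\<omega>. L'' \<omega> - 1) \<le> L1_norm M (\<lambda>\<omega>. Lh \<omega> - 1)"
      proof -
        have "L1_norm M0 (\<lambda>\<omega>. L'' \<omega> - 1) = (\<integral>x. \<bar>k x - 1\<bar> \<partial>\<mu>)"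
          unfolding L1_norm_def L''_def \<mu>_def by (subst integral_distr) auto
        also have "\<dots> = (\<integral>x. sg x * (k x - 1) \<partial>\<mu>)" by (rule Bochner_Integration.integral_cong) (auto simp: sg_def)
        also have "\<dots> = (\<integral>\<omega>. sg (X \<omega>) * (Lh \<omega> - 1) \<partial>M)" by (rule hid[symmetric, of _ 1]) (auto simp: sg_def)
        also have "\<dots> \<le> (\<integral>\<omega>. \<bar>Lh \<omega> - 1\<bar> \<partial>M)"
        proof (rule integral_mono)
          show "integrable M (\<lambda>\<omega>. sg (X \<omega>) * (Lh \<omega> - 1))"
            by (rule int_bmult[of _ _ _ 1]) (use Li in \<open>auto simp: sg_def\<close>)
          show "integrable M (\<lambda>\<omega>. \<bar>Lh \<omega> - 1\<bar>)" using Li by auto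
          show "\<And>\<omega>. \<omega> \<in> space M \<Longrightarrow> sg (X \<omega>) * (Lh \<omega> - 1) \<le> \<bar>Lh \<omega> - 1\<bar>"
            by (auto simp: sg_def)
        qed
        finally show ?thesis by (simp add: L1_norm_def)
      qed
      have lL: "l0 (\<lambda>\<omega>. L'' \<omega> - 1) = (\<integral>\<omega>. g (X \<omega>) * (Lh \<omega> - 1) \<partial>M)"
      proof -
        have km: "(\<lambda>x. k x - 1) \<in> L1_0 \<mu>"
          using ki k1 by (auto simp: L1_0_def mu.prob_space)
        have "l0 (\<lambda>\<omega>. L'' \<omega> - 1) = (\<integral>x. g x * (k x - 1) \<partial>\<mu>)"
          using R km unfolding L''_def \<mu>_def by auto
        also have "\<dots> = (\<integral>\<omega>. g (X \<omega>) * (Lh \<omega> - 1) \<partial>M)" by (rule hid[symmetric, OF g gB])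
        finally show ?thesis .
      qed
      have "\<bar>F_fun f \<xi> M0 L'' - F_fun f \<xi> M0 (\<lambda>_. 1) - l0 (\<lambda>\<omega>. L'' \<omega> - 1)\<bar> \<le> \<epsilon> * L1_norm M0 (\<lambda>\<omega>. L'' \<omega> - 1)"
        using d(2) L''d nL small by auto
      also have "\<dots> \<le> \<epsilon> * L1_norm M (\<lambda>\<omega>. Lh \<omega> - 1)" using nL e by simp
      finally show "\<bar>F_fun f X M Lh - F_fun f X M (\<lambda>_. 1) - (\<integral>\<omega>. g (X \<omega>) * (Lh \<omega> - 1) \<partial>M)\<bar> \<le> \<epsilon> * L1_norm M (\<lambda>\<omega>. Lh \<omega> - 1)"
        using FL F1 lL by simp
    qed
  qed
qed


lemma core_deriv:
  fixes \<xi> :: "'a \<Rightarrow> 'b::topological_space" and X :: "'c \<Rightarrow> 'b"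
  assumes P0: "prob_space M0" and \<xi>[measurable]: "\<xi> \<in> measurable M0 borel"
    and P: "prob_space M" and X[measurable]: "X \<in> measurable M borel"
    and law: "distr M borel X = distr M0 borel \<xi>"
    and h0: "has_DF M0 (F_fun f \<xi> M0) (\<lambda>_. 1) l0"
    and g[measurable]: "g \<in> borel_measurable borel" and gB: "\<forall>x. \<bar>g x\<bar> \<le> B"
    and g0: "integral\<^sup>L (distr M0 borel \<xi>) g = 0"
    and R: "\<forall>k\<in>L1_0 (distr M0 borel \<xi>). l0 (\<lambda>\<omega>. k (\<xi> \<omega>)) = (\<integral>x. g x * k x \<partial>distr M0 borel \<xi>)"
  shows "derivative_equals M (F_fun f X M) (\<lambda>_. 1) (\<lambda>\<omega>. g (X \<omega>)) M"
proof -
  interpret prob_space M by fact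
  note DF = core_DF[OF P0 \<xi> P X law h0 g gB R]
  have gX_int: "integrable M (\<lambda>\<omega>. g (X \<omega>))"
    by (rule integrable_const_bound[of _ B]) (use gB in auto)
  have Linf: "(\<lambda>\<omega>. g (X \<omega>)) \<in> Linf_0 M"
    unfolding Linf_0_def
  proof (intro CollectI conjI)
    show "(\<lambda>\<omega>. g (X \<omega>)) \<in> borel_measurable M" by measurable
    show "\<exists>C. AE \<omega> in M. \<bar>g (X \<omega>)\<bar> \<le> C" using gB by blast
    have "(\<integral>\<omega>. g (X \<omega>) \<partial>M) = integral\<^sup>L (distr M borel X) g" by (rule integral_distr[symmetric]) auto
    then show "(\<integral>\<omega>. g (X \<omega>) \<partial>M) = 0" using law g0 by simp
  qed
  have rep: "represents M l (\<lambda>\<omega>. g (X \<omega>))" if hl: "has_DF M (F_fun f X M) (\<lambda>_. 1) l" for l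
    unfolding represents_def using Linf uniq_DF[OF P hl DF] by simp
  show ?thesis
    unfolding derivative_equals_def
  proof (intro conjI allI impI)
    show "\<exists>l. has_DF M (F_fun f X M) (\<lambda>_. 1) l" using DF by blast
    show "represents M l (\<lambda>\<omega>. g (X \<omega>))" if "has_DF M (F_fun f X M) (\<lambda>_. 1) l" for l
      using rep that by blast
  next
    fix l D assume a: "has_DF M (F_fun f X M) (\<lambda>_. 1) l \<and> represents M l D"
    then have r1: "represents M l (\<lambda>\<omega>. g (X \<omega>))" and r2: "represents M l D" using rep by auto
    from r2 have D: "D \<in> Linf_0 M" and Dl: "\<forall>\<eta>\<in>L1_0 M. l \<eta> = (\<integral>\<omega>. D \<omega> * \<eta> \<omega> \<partial>M)"
      by (auto simp: represents_def)
    from r1 have gl: "\<forall>\<eta>\<in>L1_0 M. l \<eta> = (\<integral>\<omega>. g (X \<omega>) * \<eta> \<omega> \<partial>M)"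
      by (auto simp: represents_def)
    obtain C where Dm[measurable]: "D \<in> borel_measurable M" and DC: "AE \<omega> in M. \<bar>D \<omega>\<bar> \<le> C" and D0: "integral\<^sup>L M D = 0"
      using D by (auto simp: Linf_0_def)
    have Di: "integrable M D" by (rule integrable_const_bound[of _ C]) (use DC Dm in auto)
    define \<eta> where "\<eta> \<equiv> \<lambda>\<omega>. D \<omega> - g (X \<omega>)"
    have ei: "integrable M \<eta>" unfolding \<eta>_def using Di gX_int by simp
    have eL: "\<eta> \<in> L1_0 M" unfolding L1_0_def using ei Di gX_int D0 Linf
      by (simp add: \<eta>_def Bochner_Integration.integral_diff Linf_0_def)
    have i1: "integrable M (\<lambda>\<omega>. D \<omega> * \<eta> \<omega>)" by (rule int_aebmult[OF ei Dm DC])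
    have i2: "integrable M (\<lambda>\<omega>. g (X \<omega>) * \<eta> \<omega>)"
      by (rule int_bmult[OF ei, of _ B]) (use gB in auto)
    have "(\<integral>\<omega>. D \<omega> * \<eta> \<omega> \<partial>M) = (\<integral>\<omega>. g (X \<omega>) * \<eta> \<omega> \<partial>M)" using Dl gl eL by metis
    then have "(\<integral>\<omega>. D \<omega> * \<eta> \<omega> - g (X \<omega>) * \<eta> \<omega> \<partial>M) = 0"
      using i1 i2 by (simp add: Bochner_Integration.integral_diff)
    then have "(\<integral>\<omega>. (\<eta> \<omega>)\<^sup>2 \<partial>M) = 0" by (simp add: \<eta>_def power2_eq_square left_diff_distrib)
    moreover have "integrable M (\<lambda>\<omega>. (\<eta> \<omega>)\<^sup>2)"
      using Bochner_Integration.integrable_diff[OF i1 i2] by (simp add: \<eta>_def power2_eq_square left_diff_distrib)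
    ultimately have "AE \<omega> in M. (\<eta> \<omega>)\<^sup>2 = 0"
      by (subst (asm) integral_nonneg_eq_0_iff_AE) auto
    then show "AE \<omega> in M. D \<omega> = g (X \<omega>)" by (auto simp: \<eta>_def elim: eventually_mono)
  qed
qed


theorem theorem3p1:
  fixes Q :: "'a::topological_space measure"
    and \<xi> :: "'a \<Rightarrow> real ^ 'd"
    and f :: "(real ^ 'd) measure \<Rightarrow> real"
    and L :: "'a \<Rightarrow> real"
  assumes radon: "radon_space TYPE('a)"
    and Q_sets: "sets Q = sets borel"
    and Q_prob: "prob_space Q"
    and \<xi>_meas: "\<xi> \<in> measurable (completion Q) borel"
    and L_dens: "L \<in> dens_set (completion Q)"
    and diff: "\<exists>l. has_DF (density (completion Q) (\<lambda>\<omega>. ennreal (L \<omega>)))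
                   (F_fun f \<xi> (density (completion Q) (\<lambda>\<omega>. ennreal (L \<omega>)))) (\<lambda>_. 1) l"
  shows "\<exists>g :: real ^ 'd \<Rightarrow> real. g \<in> borel_measurable borel \<and> bounded (range g) \<and>
    derivative_equals (density (completion Q) (\<lambda>\<omega>. ennreal (L \<omega>)))
      (F_fun f \<xi> (density (completion Q) (\<lambda>\<omega>. ennreal (L \<omega>)))) (\<lambda>_. 1)
      (\<lambda>\<omega>. g (\<xi> \<omega>)) (completion Q) \<and>
    (\<forall>(Q' :: 'a measure) (L' :: 'a \<Rightarrow> real) (\<xi>' :: 'a \<Rightarrow> real ^ 'd).
       sets Q' = sets (completion Q) \<and> prob_space Q' \<and> L' \<in> dens_set Q' \<and>
       \<xi>' \<in> measurable Q' borel \<and> law_under Q' L' \<xi>' = law_under (completion Q) L \<xi> \<longrightarrow>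
       derivative_equals (density Q' (\<lambda>\<omega>. ennreal (L' \<omega>)))
         (F_fun f \<xi>' (density Q' (\<lambda>\<omega>. ennreal (L' \<omega>)))) (\<lambda>_. 1)
         (\<lambda>\<omega>. g (\<xi>' \<omega>)) (density Q' (\<lambda>\<omega>. ennreal (L' \<omega>))))"
proof -
  define Qc where "Qc \<equiv> completion Q"
  define M0 where "M0 \<equiv> density Qc (\<lambda>\<omega>. ennreal (L \<omega>))"
  have Pc: "prob_space Qc" unfolding Qc_def using Q_prob by (rule prob_space.prob_space_completion)
  have P0: "prob_space M0" unfolding M0_def using L_dens unfolding Qc_def[symmetric] by (rule dens_prob[OF Pc])
  interpret M0: prob_space M0 by fact
  have \<xi>0[measurable]: "\<xi> \<in> measurable M0 borel" unfolding M0_def Qc_def using \<xi>_meas by simp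
  obtain l0 where h0: "has_DF M0 (F_fun f \<xi> M0) (\<lambda>_. 1) l0" using diff unfolding M0_def Qc_def by blast
  define \<mu> where "\<mu> \<equiv> distr M0 borel \<xi>"
  interpret mu: prob_space \<mu> unfolding \<mu>_def by (rule M0.prob_space_distr) simp
  have s_mu: "sets \<mu> = sets borel" unfolding \<mu>_def by simp
  note m_mu = measurable_cong_sets[OF s_mu refl]
  have cl0: "cont_lin_L1_0 M0 l0" using h0 by (simp add: has_DF_def)
  have comp: "(\<lambda>\<omega>. k (\<xi> \<omega>)) \<in> L1_0 M0" if "k \<in> L1_0 \<mu>" for k
  proof -
    have "k \<in> borel_measurable \<mu>" using that by (auto simp: L1_0_def)
    then have km[measurable]: "k \<in> borel_measurable borel" unfolding m_mu .
    show ?thesis using that unfolding L1_0_def \<mu>_def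
      by (simp add: integrable_distr_eq integral_distr)
  qed
  have cl: "cont_lin_L1_0 \<mu> (\<lambda>k. l0 (\<lambda>\<omega>. k (\<xi> \<omega>)))"
    unfolding cont_lin_L1_0_def
  proof (intro conjI ballI allI)
    fix a b assume "a \<in> L1_0 \<mu>" "b \<in> L1_0 \<mu>"
    then show "l0 (\<lambda>\<omega>. a (\<xi> \<omega>) + b (\<xi> \<omega>)) = l0 (\<lambda>\<omega>. a (\<xi> \<omega>)) + l0 (\<lambda>\<omega>. b (\<xi> \<omega>))"
      using cl_add[OF cl0 comp comp] by simp
  next
    fix c a assume "a \<in> L1_0 \<mu>"
    then show "l0 (\<lambda>\<omega>. c * a (\<xi> \<omega>)) = c * l0 (\<lambda>\<omega>. a (\<xi> \<omega>))"
      using cl_mult[OF cl0 comp] by simp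
  next
    obtain C where C: "\<forall>\<eta>\<in>L1_0 M0. \<bar>l0 \<eta>\<bar> \<le> C * L1_norm M0 \<eta>" using cl0 by (auto simp: cont_lin_L1_0_def)
    show "\<exists>C. \<forall>\<eta>\<in>L1_0 \<mu>. \<bar>l0 (\<lambda>\<omega>. \<eta> (\<xi> \<omega>))\<bar> \<le> C * L1_norm \<mu> \<eta>"
    proof (intro exI ballI)
      fix \<eta> assume e: "\<eta> \<in> L1_0 \<mu>"
      have "\<eta> \<in> borel_measurable \<mu>" using e by (auto simp: L1_0_def)
      then have em[measurable]: "\<eta> \<in> borel_measurable borel" unfolding m_mu .
      have "L1_norm M0 (\<lambda>\<omega>. \<eta> (\<xi> \<omega>)) = L1_norm \<mu> \<eta>"
        unfolding L1_norm_def \<mu>_def by (subst integral_distr) auto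
      then show "\<bar>l0 (\<lambda>\<omega>. \<eta> (\<xi> \<omega>))\<bar> \<le> C * L1_norm \<mu> \<eta>" using C comp[OF e] by metis
    qed
  qed
  obtain g where gm: "g \<in> borel_measurable \<mu>" and gB: "\<exists>B. \<forall>x. \<bar>g x\<bar> \<le> B"
    and g0: "integral\<^sup>L \<mu> g = 0" and R: "\<forall>k\<in>L1_0 \<mu>. l0 (\<lambda>\<omega>. k (\<xi> \<omega>)) = (\<integral>x. g x * k x \<partial>\<mu>)"
    using dual_L1[OF mu.prob_space_axioms cl] by blast
  obtain B where B: "\<forall>x. \<bar>g x\<bar> \<le> B" using gB by blast
  have g[measurable]: "g \<in> borel_measurable borel" using gm[unfolded m_mu] .
  have bdd: "bounded (range g)" unfolding bounded_iff using B by auto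
  have main: "derivative_equals M (F_fun f X M) (\<lambda>_. 1) (\<lambda>\<omega>. g (X \<omega>)) M"
    if P: "prob_space M" and X: "X \<in> measurable M borel" and law: "distr M borel X = distr M0 borel \<xi>"
    for M :: "'a measure" and X
    by (rule core_deriv[OF P0 \<xi>0 P X law h0 g B g0[unfolded \<mu>_def] R[unfolded \<mu>_def]])
  have part1: "derivative_equals M0 (F_fun f \<xi> M0) (\<lambda>_. 1) (\<lambda>\<omega>. g (\<xi> \<omega>)) Qc"
  proof -
    have d: "derivative_equals M0 (F_fun f \<xi> M0) (\<lambda>_. 1) (\<lambda>\<omega>. g (\<xi> \<omega>)) M0"
      by (rule main[OF P0 \<xi>0 refl])
    have Lm: "L \<in> borel_measurable Qc" using L_dens by (auto simp: dens_set_def Qc_def)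
    have Lp: "AE \<omega> in Qc. 0 < L \<omega>" unfolding Qc_def using L_dens by (simp add: dens_set_def)
    have ae: "AE \<omega> in Qc. P \<omega>" if "AE \<omega> in M0. P \<omega>" for P
    proof -
      have "AE \<omega> in Qc. 0 < ennreal (L \<omega>) \<longrightarrow> P \<omega>"
        using that unfolding M0_def by (subst (asm) AE_density) (use Lm in auto)
      then show ?thesis using Lp by eventually_elim auto
    qed
    show ?thesis using d ae unfolding derivative_equals_def by blast
  qed
  show ?thesis
  proof (intro exI[of _ g] conjI g bdd allI impI)
    show "derivative_equals (density (completion Q) (\<lambda>\<omega>. ennreal (L \<omega>)))
      (F_fun f \<xi> (density (completion Q) (\<lambda>\<omega>. ennreal (L \<omega>)))) (\<lambda>_. 1)
      (\<lambda>\<omega>. g (\<xi> \<omega>)) (completion Q)" using part1 unfolding M0_def Qc_def .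
  next
    fix Q' :: "'a measure" and L' :: "'a \<Rightarrow> real" and \<xi>' :: "'a \<Rightarrow> real ^ 'd"
    assume a: "sets Q' = sets (completion Q) \<and> prob_space Q' \<and> L' \<in> dens_set Q' \<and>
       \<xi>' \<in> measurable Q' borel \<and> law_under Q' L' \<xi>' = law_under (completion Q) L \<xi>"
    have P': "prob_space (density Q' (\<lambda>\<omega>. ennreal (L' \<omega>)))" using a dens_prob by blast
    have X': "\<xi>' \<in> measurable (density Q' (\<lambda>\<omega>. ennreal (L' \<omega>))) borel" using a by simp
    have law': "distr (density Q' (\<lambda>\<omega>. ennreal (L' \<omega>))) borel \<xi>' = distr M0 borel \<xi>"
      using a unfolding law_under_def M0_def Qc_def by simp
    show "derivative_equals (density Q' (\<lambda>\<omega>. ennreal (L' \<omega>)))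
         (F_fun f \<xi>' (density Q' (\<lambda>\<omega>. ennreal (L' \<omega>)))) (\<lambda>_. 1)
         (\<lambda>\<omega>. g (\<xi>' \<omega>)) (density Q' (\<lambda>\<omega>. ennreal (L' \<omega>)))"
      by (rule main[OF P' X' law'])
  qed
qed


end
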